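(* Let $k\ge 2$ and $n$ be integers with $2k-1 \le n$. Then $$N(BM,k,n) \le N(GM,k,n)\le (n-k+1)\cdot\mathsf{m}(k-1,n-1).$$
   Context: We are given $n$ balls, the set $[n]=\{1,\dots,n\}$, each colored with one of two colors by an unknown coloring. A ball $i$ is a majority ball if more than $n/2$ balls have the same color as $i$. A query is a subset $Q\subseteq[n]$ with $|Q|=k$. In the General (Yes-No) Model (GM), the answer to a query $Q$ is YES if $Q$ contains two balls of different colors and NO otherwise. In Borzyszkowski's Model (BM), the answer is YES together with a pair of balls of $Q$ having different colors (the pair may be any such pair) if such a pair exists, and NO if all balls of $Q$ have the same color. A non-adaptive strategy is a family of queries $Q_1,\dots,Q_q$ fixed in advance. It succeeds if for every coloring and every admissible sequence of answers, the answers determine the outcome: either every coloring consistent with the answers has no majority ball, or there is a ball that is a majority ball in every coloring consistent with the answers. $N(GM,k,n)$ and $N(BM,k,n)$ denote the minimum number of queries in a successful non-adaptive strategy in the respective model. A hypergraph has Property B if its vertices can be 2-colored with no monochromatic edge. For $k\ge1$ and $n\ge 2k-1$, $\mathsf{m}(k,n)$ is the minimum number of edges of a $k$-uniform hypergraph on $n$ vertices that does not have Property B. *)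

theory Defs
  imports Main
begin

text \<open>Balls are 1..n; a coloring is any function nat => bool (only values on 1..n matter).\<close>

definition balls :: "nat \<Rightarrow> nat set" where
  "balls n = {1..n}"

definition is_majority :: "nat \<Rightarrow> (nat \<Rightarrow> bool) \<Rightarrow> nat \<Rightarrow> bool" where
  "is_majority n c i \<longleftrightarrow> i \<in> balls n \<and> 2 * card {j \<in> balls n. c j = c i} > n"

definition has_majority :: "nat \<Rightarrow> (nat \<Rightarrow> bool) \<Rightarrow> bool" where
  "has_majority n c \<longleftrightarrow> (\<exists>i. is_majority n c i)"

text \<open>Outcome determined by a set C of colorings consistent with the answers.\<close>
definition determines :: "nat \<Rightarrow> (nat \<Rightarrow> bool) set \<Rightarrow> bool" where
  "determines n C \<longleftrightarrow> (\<forall>c\<in>C. \<not> has_majority n c) \<or> (\<exists>i. \<forall>c\<in>C. is_majority n c i)"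

definition valid_queries :: "nat \<Rightarrow> nat \<Rightarrow> nat set list \<Rightarrow> bool" where
  "valid_queries k n qs \<longleftrightarrow> (\<forall>Q\<in>set qs. Q \<subseteq> balls n \<and> card Q = k)"

definition gm_answer :: "(nat \<Rightarrow> bool) \<Rightarrow> nat set \<Rightarrow> bool" where
  "gm_answer c Q \<longleftrightarrow> (\<exists>a\<in>Q. \<exists>b\<in>Q. c a \<noteq> c b)"

definition gm_success :: "nat \<Rightarrow> nat set list \<Rightarrow> bool" where
  "gm_success n qs \<longleftrightarrow> (\<forall>c. determines n
      {c'. \<forall>i<length qs. gm_answer c' (qs ! i) = gm_answer c (qs ! i)})"

text \<open>Borzyszkowski's model: answer None (NO) or Some (a,b) (YES with a pair of differently
  colored balls of Q, chosen adversarially).\<close>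
definition bm_admissible :: "(nat \<Rightarrow> bool) \<Rightarrow> nat set \<Rightarrow> (nat \<times> nat) option \<Rightarrow> bool" where
  "bm_admissible c Q ans \<longleftrightarrow>
     (case ans of
        None \<Rightarrow> \<not> gm_answer c Q
      | Some (a, b) \<Rightarrow> a \<in> Q \<and> b \<in> Q \<and> c a \<noteq> c b)"

definition bm_success :: "nat \<Rightarrow> nat set list \<Rightarrow> bool" where
  "bm_success n qs \<longleftrightarrow> (\<forall>c (ans :: (nat \<times> nat) option list).
      length ans = length qs \<and> (\<forall>i<length qs. bm_admissible c (qs ! i) (ans ! i)) \<longrightarrow>
      determines n {c'. \<forall>i<length qs. bm_admissible c' (qs ! i) (ans ! i)})"

definition N_GM :: "nat \<Rightarrow> nat \<Rightarrow> nat" where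
  "N_GM k n = (LEAST q. \<exists>qs. length qs = q \<and> valid_queries k n qs \<and> gm_success n qs)"

definition N_BM :: "nat \<Rightarrow> nat \<Rightarrow> nat" where
  "N_BM k n = (LEAST q. \<exists>qs. length qs = q \<and> valid_queries k n qs \<and> bm_success n qs)"

definition property_B :: "nat set \<Rightarrow> nat set set \<Rightarrow> bool" where
  "property_B V E \<longleftrightarrow> (\<exists>f :: nat \<Rightarrow> bool. \<forall>e\<in>E. \<exists>a\<in>e. \<exists>b\<in>e. f a \<noteq> f b)"

definition mB :: "nat \<Rightarrow> nat \<Rightarrow> nat" where
  "mB k n = (LEAST m. \<exists>E. E \<subseteq> {e. e \<subseteq> {1..n} \<and> card e = k} \<and> card E = m
                       \<and> \<not> property_B {1..n} E)"

end

theory Submission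
  imports Defs
begin

lemma sub1: "F \<subseteq> {1..n-1} \<Longrightarrow> F \<subseteq> {1..(n::nat)}"
  by (meson atLeastatMost_subset_iff diff_le_self order_refl subset_trans)

lemma determines_mono:
  assumes "determines n C" "D \<subseteq> C" shows "determines n D"
  using assms unfolding determines_def by blast

lemma mono_aux:
  assumes "\<not> gm_answer d (insert x F)" "f \<in> F"
  shows "gm_answer d (insert y F) = (d y \<noteq> d x)"
  using assms unfolding gm_answer_def by (metis insert_iff)

lemma gm_main:
  assumes k2: "2 \<le> k" "2*k-1 \<le> n"
  and EH: "E \<subseteq> {e. e \<subseteq> {1..n-1} \<and> card e = k-1}" "\<not> property_B {1..n-1} E"
  and Qset: "set qs = {insert x F | F x. F \<in> E \<and> x \<in> {1..n} - F}"
  shows "gm_success n qs"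
  unfolding gm_success_def
proof
  fix c
  define C where "C = {c'. \<forall>i<length qs. gm_answer c' (qs ! i) = gm_answer c (qs ! i)}"
  have C_eq: "C = {c'. \<forall>Q\<in>set qs. gm_answer c' Q = gm_answer c Q}"
    unfolding C_def by (rule Collect_cong) (metis in_set_conv_nth)
  have Fne: "F \<noteq> {}" if "F \<in> E" for F
  proof
    assume "F = {}" then have "card F = 0" by simp
    moreover have "card F = k - 1" using that EH(1) by auto
    ultimately show False using k2 by simp
  qed
  show "determines n C"
  proof (cases "\<exists>Q\<in>set qs. \<not> gm_answer c Q")
    case True
    then obtain F x where F: "F \<in> E" and x: "x \<in> {1..n} - F" and mono: "\<not> gm_answer c (insert x F)"
      using Qset by auto
    obtain f where f: "f \<in> F" using Fne[OF F] by auto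
    have same: "\<forall>i\<in>balls n. \<forall>j\<in>balls n. (c i = c j) = (c' i = c' j)" if c': "c' \<in> C" for c'
    proof -
      have ans: "gm_answer c' Q = gm_answer c Q" if "Q \<in> set qs" for Q
        using c' that unfolding C_eq by auto
      have mono': "\<not> gm_answer c' (insert x F)"
        using ans[of "insert x F"] mono Qset F x by auto
      have key: "(c y = c x) = (c' y = c' x)" if y: "y \<in> {1..n}" for y
      proof (cases "y \<in> F")
        case True
        then show ?thesis using mono mono' unfolding gm_answer_def by blast
      next
        case False
        have "insert y F \<in> set qs" using Qset F y False by auto
        then have "gm_answer c' (insert y F) = gm_answer c (insert y F)" by (rule ans)
        then have "(c' y \<noteq> c' x) = (c y \<noteq> c x)" using mono_aux[OF mono f, of y] mono_aux[OF mono' f, of y] by simp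
        then show ?thesis by blast
      qed
      show ?thesis
      proof (intro ballI)
        fix i j assume "i \<in> balls n" "j \<in> balls n"
        then have "(c i = c x) = (c' i = c' x)" "(c j = c x) = (c' j = c' x)"
          using key unfolding balls_def by auto
        then show "(c i = c j) = (c' i = c' j)" by (smt (verit))
      qed
    qed
    have maj: "is_majority n c' i = is_majority n c i" if "c' \<in> C" for c' i
    proof (cases "i \<in> balls n")
      case True
      have "{j \<in> balls n. c' j = c' i} = {j \<in> balls n. c j = c i}"
        using same[OF that] True by auto
      then show ?thesis unfolding is_majority_def by simp
    next
      case False then show ?thesis unfolding is_majority_def by simp
    qed
    show ?thesis
    proof (cases "has_majority n c")
      case True
      then obtain i where "is_majority n c i" unfolding has_majority_def by auto
      then show ?thesis unfolding determines_def using maj by blast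
    next
      case False
      then show ?thesis unfolding determines_def has_majority_def using maj by blast
    qed
  next
    case False
    have "is_majority n c' n" if c': "c' \<in> C" for c'
    proof -
      have yes: "gm_answer c' Q" if "Q \<in> set qs" for Q
        using c' that False unfolding C_eq by auto
      have "\<not> (\<forall>e\<in>E. \<exists>a\<in>e. \<exists>b\<in>e. c' a \<noteq> c' b)"
      proof
        assume "\<forall>e\<in>E. \<exists>a\<in>e. \<exists>b\<in>e. c' a \<noteq> c' b"
        then have "property_B {1..n-1} E" unfolding property_B_def by (rule exI[of _ c'])
        then show False using EH(2) by contradiction
      qed
      then obtain F where F: "F \<in> E" and Fm: "\<forall>a\<in>F. \<forall>b\<in>F. c' a = c' b"
        by auto
      obtain f where f: "f \<in> F" using Fne[OF F] by auto
      have Fsub: "F \<subseteq> {1..n-1}" and cF: "card F = k - 1" using F EH(1) by auto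
      have n1: "1 \<le> n" using k2 by simp
      have nF: "n \<notin> F" using Fsub n1 by auto
      have diff: "c' y \<noteq> c' f" if y: "y \<in> {1..n} - F" for y
      proof -
        have "insert y F \<in> set qs" using Qset F y by auto
        then have "gm_answer c' (insert y F)" by (rule yes)
        then obtain a b where ab: "a \<in> insert y F" "b \<in> insert y F" "c' a \<noteq> c' b"
          unfolding gm_answer_def by blast
        show ?thesis
        proof
          assume yf: "c' y = c' f"
          have "c' a = c' f" using ab(1) yf Fm f by blast
          moreover have "c' b = c' f" using ab(2) yf Fm f by blast
          ultimately show False using ab(3) by simp
        qed
      qed
      have dn: "c' n \<noteq> c' f" using diff nF n1 by auto
      have cls: "{j \<in> balls n. c' j = c' n} = {1..n} - F"
      proof (rule set_eqI)
        fix j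
        show "(j \<in> {j \<in> balls n. c' j = c' n}) = (j \<in> {1..n} - F)"
        proof (cases "j \<in> F")
          case True
          then have "c' j \<noteq> c' n" using Fm f dn by metis
          then show ?thesis using True by blast
        next
          case False
          have "j \<in> {1..n} \<Longrightarrow> c' j = c' n" using diff[of j] dn False by (smt (verit) DiffI)
          then show ?thesis using False unfolding balls_def by auto
        qed
      qed
      have "{1..n-1} \<subseteq> {1..n}" by auto
      then have "F \<subseteq> {1..n}" using Fsub by (rule subset_trans[rotated])
      then have "card ({1..n} - F) = n - (k - 1)"
        using cF by (simp add: card_Diff_subset finite_subset)
      then have "card {j \<in> balls n. c' j = c' n} = n - (k - 1)" using cls by simp
      moreover have "2 * (n - (k - 1)) > n" using k2 by simp
      ultimately show ?thesis unfolding is_majority_def balls_def using n1 by simp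
    qed
    then show ?thesis unfolding determines_def by blast
  qed
qed

lemma gm_bm:
  assumes "gm_success n qs" shows "bm_success n qs"
  unfolding bm_success_def
proof (intro allI impI)
  fix c :: "nat \<Rightarrow> bool" and ans :: "(nat \<times> nat) option list"
  assume A: "length ans = length qs \<and> (\<forall>i<length qs. bm_admissible c (qs ! i) (ans ! i))"
  have "determines n {c'. \<forall>i<length qs. gm_answer c' (qs ! i) = gm_answer c (qs ! i)}"
    using assms unfolding gm_success_def by blast
  moreover have "{c'. \<forall>i<length qs. bm_admissible c' (qs ! i) (ans ! i)}
      \<subseteq> {c'. \<forall>i<length qs. gm_answer c' (qs ! i) = gm_answer c (qs ! i)}"
  proof -
    have step: "gm_answer c' Q = gm_answer c Q" if a1: "bm_admissible c Q an" and a2: "bm_admissible c' Q an" for c' Q an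
    proof (cases an)
      case None then show ?thesis using a1 a2 unfolding bm_admissible_def by simp
    next
      case (Some p)
      obtain a b where "p = (a, b)" by force
      then show ?thesis using a1 a2 Some unfolding bm_admissible_def gm_answer_def by auto
    qed
    show ?thesis using A step by blast
  qed
  ultimately show "determines n {c'. \<forall>i<length qs. bm_admissible c' (qs ! i) (ans ! i)}"
    by (rule determines_mono)
qed

lemma complete_noB:
  assumes "2 * j \<le> m"
  shows "\<not> property_B {1..m} {e. e \<subseteq> {1..m} \<and> card e = j}"
proof
  assume "property_B {1..m} {e. e \<subseteq> {1..m} \<and> card e = j}"
  then obtain f :: "nat \<Rightarrow> bool" where f: "\<forall>e\<in>{e. e \<subseteq> {1..m} \<and> card e = j}. \<exists>a\<in>e. \<exists>b\<in>e. f a \<noteq> f b"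
    unfolding property_B_def by blast
  let ?T = "{x \<in> {1..m}. f x}" and ?F = "{x \<in> {1..m}. \<not> f x}"
  have "?T \<union> ?F = {1..m}" "?T \<inter> ?F = {}" by auto
  then have "card ?T + card ?F = m" by (metis card_Un_disjoint card_atLeastAtMost diff_Suc_1 finite_Un finite_atLeastAtMost)
  then have "j \<le> card ?T \<or> j \<le> card ?F" using assms by linarith
  then have "\<exists>S. S \<subseteq> {1..m} \<and> card S = j \<and> (\<forall>a\<in>S. \<forall>b\<in>S. f a = f b)"
  proof
    assume "j \<le> card ?T"
    then obtain S where "S \<subseteq> ?T" "card S = j" by (meson obtain_subset_with_card_n)
    then show ?thesis by (intro exI[of _ S]) auto
  next
    assume "j \<le> card ?F"
    then obtain S where "S \<subseteq> ?F" "card S = j" by (meson obtain_subset_with_card_n)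
    then show ?thesis by (intro exI[of _ S]) auto
  qed
  then show False using f by blast
qed

theorem theorem9:
  fixes k n :: nat
  assumes "2 \<le> k" and "2 * k - 1 \<le> n"
  shows "N_BM k n \<le> N_GM k n \<and> N_GM k n \<le> (n - k + 1) * mB (k - 1) (n - 1)"
proof -
  let ?P = "\<lambda>m. \<exists>E. E \<subseteq> {e. e \<subseteq> {1..n-1} \<and> card e = k-1} \<and> card E = m
                       \<and> \<not> property_B {1..n-1} E"
  have "?P (card {e. e \<subseteq> {1..n-1} \<and> card e = k-1})"
  proof -
    have "\<not> property_B {1..n-1} {e. e \<subseteq> {1..n-1} \<and> card e = k-1}"
      by (rule complete_noB) (use assms in linarith)
    then show ?thesis by blast
  qed
  then have "?P (LEAST m. ?P m)" by (rule LeastI[of ?P])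
  then have "?P (mB (k - 1) (n - 1))" unfolding mB_def .
  then obtain E where E: "E \<subseteq> {e. e \<subseteq> {1..n-1} \<and> card e = k-1}" "card E = mB (k - 1) (n - 1)"
    "\<not> property_B {1..n-1} E" by blast
  have finE: "finite E"
    by (rule finite_subset[OF E(1)]) (rule finite_subset[of _ "Pow {1..n-1}"], auto)
  obtain es where es: "set es = E" "distinct es" using finite_distinct_list[OF finE] by blast
  have les: "length es = card E" using es distinct_card by metis
  define qs where "qs = concat (map (\<lambda>F. map (\<lambda>x. insert x F) (sorted_list_of_set ({1..n} - F))) es)"
  have Qset: "set qs = {insert x F | F x. F \<in> E \<and> x \<in> {1..n} - F}"
    unfolding qs_def using es(1) by auto blast
  have lenF: "length (sorted_list_of_set ({1..n} - F)) = n - k + 1" if "F \<in> E" for F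
  proof -
    have "F \<subseteq> {1..n-1}" "card F = k - 1" using that E(1) by auto
    then have "F \<subseteq> {1..n}" "card F = k - 1" using sub1 by auto
    then have "card ({1..n} - F) = n - (k - 1)" by (simp add: card_Diff_subset finite_subset)
    then show ?thesis using assms by simp
  qed
  have "length qs = sum_list (map (\<lambda>F. n - k + 1) es)"
    unfolding qs_def length_concat map_map o_def
    by (rule arg_cong[where f=sum_list], rule map_cong, simp, simp add: lenF[simplified] es(1))
  also have "\<dots> = (n - k + 1) * mB (k - 1) (n - 1)"
    using les E(2) by (simp add: sum_list_triv)
  finally have lq: "length qs = (n - k + 1) * mB (k - 1) (n - 1)" .
  have valid: "valid_queries k n qs"
    unfolding valid_queries_def
  proof
    fix Q assume "Q \<in> set qs"
    then obtain F x where F: "F \<in> E" and x: "x \<in> {1..n} - F" and Q: "Q = insert x F"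
      using Qset by auto
    have "F \<subseteq> {1..n-1}" "card F = k - 1" using F E(1) by auto
    moreover have "finite F" using calculation(1) finite_subset by blast
    moreover have "F \<subseteq> {1..n}" using calculation(1) by (rule sub1)
    ultimately show "Q \<subseteq> balls n \<and> card Q = k" using Q x assms unfolding balls_def by auto
  qed
  have gm: "gm_success n qs" by (rule gm_main[OF assms E(1) E(3) Qset])
  have ex: "\<exists>qs. length qs = length qs \<and> valid_queries k n qs \<and> gm_success n qs"
    using valid gm by blast
  have le1: "N_GM k n \<le> length qs" unfolding N_GM_def
    by (rule Least_le) (use valid gm in blast)
  have "\<exists>qs'. length qs' = N_GM k n \<and> valid_queries k n qs' \<and> gm_success n qs'"
    unfolding N_GM_def by (rule LeastI[of _ "length qs"]) (use valid gm in blast)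
  then obtain qs' where q': "length qs' = N_GM k n" "valid_queries k n qs'" "gm_success n qs'" by blast
  have "N_BM k n \<le> N_GM k n" unfolding N_BM_def
    by (rule Least_le) (use q' gm_bm in blast)
  then show ?thesis using le1 lq by simp
qed

end
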